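(* Let $G=\mathbb{R}^2\setminus\{-e_1,e_1\}$, where $e_1=(1,0)$. Let $\beta>0$ be the unique positive solution of $\operatorname{arsinh}t+\arctan t=\pi$ ($\beta\approx3.1841$). Then \[ A_G\ge\frac{2\operatorname{arsinh}\beta}{\log\left(1+\frac{2\beta}{\sqrt{1+\beta^2}}\right)}\approx3.5131 . \]
   Context: For a domain $G\subsetneq\mathbb{R}^n$ let $d_G(x)=d(x,\partial G)$; $k_G(x,y)=\inf_\gamma\int_\gamma\frac{|dx|}{d_G(x)}$ over rectifiable curves $\gamma\subset G$ joining $x,y$ (quasihyperbolic distance); $j_G(x,y)=\log\left(1+\frac{|x-y|}{\min\{d_G(x),d_G(y)\}}\right)$; the uniformity constant is $A_G=\inf\{A\ge1: k_G\le A\,j_G\text{ on }G\times G\}$ (with $\inf\emptyset=+\infty$). *)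

theory Defs
  imports "HOL-Analysis.Analysis"
begin

definition is_partition :: "real \<Rightarrow> real \<Rightarrow> (nat \<Rightarrow> real) \<Rightarrow> nat \<Rightarrow> bool" where
  "is_partition a b d n \<longleftrightarrow> d 0 = a \<and> d n = b \<and> (\<forall>i<n. d i \<le> d (Suc i))"

definition polygon_lengths :: "(real \<Rightarrow> 'a::real_normed_vector) \<Rightarrow> real \<Rightarrow> real \<Rightarrow> real set" where
  "polygon_lengths g a b =
     {\<Sum>i<n. norm (g (d (Suc i)) - g (d i)) | d n. is_partition a b d n}"

definition rectifiable_path :: "(real \<Rightarrow> 'a::real_normed_vector) \<Rightarrow> bool" where
  "rectifiable_path g \<longleftrightarrow> path g \<and> bdd_above (polygon_lengths g 0 1)"

definition arc_length :: "(real \<Rightarrow> 'a::real_normed_vector) \<Rightarrow> real \<Rightarrow> real \<Rightarrow> real" where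
  "arc_length g a b = Sup (polygon_lengths g a b)"

definition bdist :: "'a::euclidean_space set \<Rightarrow> 'a \<Rightarrow> real" where
  "bdist G x = infdist x (frontier G)"

text \<open>Quasihyperbolic length of a rectifiable curve, i.e. the arc-length integral
  of 1/d_G along g, defined as the supremum of lower Riemann--Stieltjes sums with
  respect to the arc length (the integrand is continuous and positive on the compact curve).\<close>
definition qh_length :: "'a::euclidean_space set \<Rightarrow> (real \<Rightarrow> 'a) \<Rightarrow> real" where
  "qh_length G g = Sup {\<Sum>i<n. (INF t\<in>{d i..d (Suc i)}. 1 / bdist G (g t)) * arc_length g (d i) (d (Suc i))
                        | d n. is_partition 0 1 d n}"

definition qh_dist :: "'a::euclidean_space set \<Rightarrow> 'a \<Rightarrow> 'a \<Rightarrow> real" where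
  "qh_dist G x y = Inf {qh_length G g | g. rectifiable_path g \<and> path_image g \<subseteq> G
                         \<and> pathstart g = x \<and> pathfinish g = y}"

definition j_dist :: "'a::euclidean_space set \<Rightarrow> 'a \<Rightarrow> 'a \<Rightarrow> real" where
  "j_dist G x y = ln (1 + dist x y / min (bdist G x) (bdist G y))"

text \<open>Uniformity constant A_G, with Inf of the empty set = +infinity (extended reals).\<close>
definition unif_const :: "'a::euclidean_space set \<Rightarrow> ereal" where
  "unif_const G = Inf {ereal A | A. A \<ge> 1 \<and> (\<forall>x\<in>G. \<forall>y\<in>G. qh_dist G x y \<le> A * j_dist G x y)}"

end

theory Submission
  imports Defs "HOL-Analysis.Analysis"
begin

lemma poly_ne: "a \<le> b \<Longrightarrow> norm (g b - g a) \<in> polygon_lengths g a b"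
proof -
  assume ab: "a \<le> b"
  let ?d = "\<lambda>i::nat. if i = 0 then a else b"
  have "is_partition a b ?d 1" using ab by (simp add: is_partition_def)
  moreover have "norm (g b - g a) = (\<Sum>i<1. norm (g (?d (Suc i)) - g (?d i)))" by simp
  ultimately show ?thesis unfolding polygon_lengths_def by (intro CollectI exI conjI) 
qed

lemma sum_split_add:
  fixes f :: "nat \<Rightarrow> 'b::comm_monoid_add" and m n :: nat
  shows "(\<Sum>i<m+n. f i) = (\<Sum>i<m. f i) + (\<Sum>i<n. f (m+i))"
  by (induction n) (simp_all add: add.assoc)

lemma poly_concat:
  assumes "s1 \<in> polygon_lengths g a b" "s2 \<in> polygon_lengths g b c"
  shows "s1 + s2 \<in> polygon_lengths g a c"
proof -
  obtain d1 n1 where p1: "is_partition a b d1 n1" and s1: "s1 = (\<Sum>i<n1. norm (g (d1 (Suc i)) - g (d1 i)))"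
    using assms(1) unfolding polygon_lengths_def by blast
  obtain d2 n2 where p2: "is_partition b c d2 n2" and s2: "s2 = (\<Sum>i<n2. norm (g (d2 (Suc i)) - g (d2 i)))"
    using assms(2) unfolding polygon_lengths_def by blast
  define d where "d = (\<lambda>i. if i \<le> n1 then d1 i else d2 (i - n1))"
  have part: "is_partition a c d (n1 + n2)"
    unfolding is_partition_def
  proof (intro conjI allI impI)
    show "d 0 = a" using p1 by (simp add: d_def is_partition_def)
    show "d (n1 + n2) = c" using p1 p2 by (auto simp: d_def is_partition_def)
    fix i assume i: "i < n1 + n2"
    consider "i < n1" | "i = n1" | "i > n1" by arith
    then show "d i \<le> d (Suc i)"
    proof cases
      case 1 then show ?thesis using p1 by (simp add: d_def is_partition_def)
    next
      case 2 then show ?thesis using p1 p2 i by (auto simp: d_def is_partition_def)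
    next
      case 3 then show ?thesis using p2 i by (simp add: d_def is_partition_def Suc_diff_le)
    qed
  qed
  have "(\<Sum>i<n1 + n2. norm (g (d (Suc i)) - g (d i)))
      = (\<Sum>i<n1. norm (g (d (Suc i)) - g (d i))) + (\<Sum>i<n2. norm (g (d (Suc (n1 + i))) - g (d (n1 + i))))"
    by (rule sum_split_add)
  also have "(\<Sum>i<n1. norm (g (d (Suc i)) - g (d i))) = s1"
    unfolding s1 d_def by (rule sum.cong) auto
  also have "(\<Sum>i<n2. norm (g (d (Suc (n1 + i))) - g (d (n1 + i)))) = s2"
    unfolding s2 d_def using p1 p2 unfolding is_partition_def
    by (intro sum.cong) (auto simp: Suc_diff_le)
  finally have eq: "(\<Sum>i<n1 + n2. norm (g (d (Suc i)) - g (d i))) = s1 + s2" .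
  show ?thesis using part eq[symmetric] unfolding polygon_lengths_def by blast
qed

lemma poly_split:
  assumes ab: "a \<le> b" and bc: "b \<le> c" and bdd: "bdd_above (polygon_lengths g a c)"
  shows "bdd_above (polygon_lengths g a b)" "bdd_above (polygon_lengths g b c)"
        "arc_length g a b + arc_length g b c \<le> arc_length g a c"
proof -
  have ne1: "polygon_lengths g a b \<noteq> {}" using poly_ne[OF ab] by blast
  have ne2: "polygon_lengths g b c \<noteq> {}" using poly_ne[OF bc] by blast
  have key: "s1 + s2 \<le> arc_length g a c" if "s1 \<in> polygon_lengths g a b" "s2 \<in> polygon_lengths g b c" for s1 s2
    unfolding arc_length_def using poly_concat[OF that] bdd by (rule cSup_upper)
  have nn: "0 \<le> s" if "s \<in> polygon_lengths g a b" for s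
    using that unfolding polygon_lengths_def by (auto intro!: sum_nonneg)
  have nn2: "0 \<le> s" if "s \<in> polygon_lengths g b c" for s
    using that unfolding polygon_lengths_def by (auto intro!: sum_nonneg)
  obtain s2 where s2: "s2 \<in> polygon_lengths g b c" using ne2 by blast
  obtain s1 where s1: "s1 \<in> polygon_lengths g a b" using ne1 by blast
  show b1: "bdd_above (polygon_lengths g a b)"
    using key[OF _ s2] nn2[OF s2] by (intro bdd_aboveI[where M="arc_length g a c"]) force
  show b2: "bdd_above (polygon_lengths g b c)"
    using key[OF s1] nn[OF s1] by (intro bdd_aboveI[where M="arc_length g a c"]) force
  have "arc_length g a b \<le> arc_length g a c - s2" if "s2 \<in> polygon_lengths g b c" for s2
    unfolding arc_length_def[of g a b] using key[OF _ that] ne1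
    by (intro cSup_least) (auto simp: algebra_simps)
  then have "arc_length g b c \<le> arc_length g a c - arc_length g a b"
    unfolding arc_length_def[of g b c] using ne2 
    by (intro cSup_least) (auto simp: algebra_simps)
  then show "arc_length g a b + arc_length g b c \<le> arc_length g a c" by simp
qed

lemma arc_ge_dist:
  assumes "a \<le> b" "bdd_above (polygon_lengths g a b)"
  shows "norm (g b - g a) \<le> arc_length g a b"
  unfolding arc_length_def using poly_ne[OF assms(1)] assms(2) by (rule cSup_upper)

lemma partition_range:
  assumes p: "is_partition 0 1 d n" and "i \<le> n"
  shows "0 \<le> d i \<and> d i \<le> 1"
proof -
  have mono: "d i \<le> d j" if "i \<le> j" "j \<le> n" for i j
    using that
  proof (induction j)
    case (Suc j)
    show ?case
    proof (cases "i = Suc j")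
      case False
      then have "i \<le> j" using Suc.prems by simp
      then have "d i \<le> d j" using Suc by simp
      moreover have "d j \<le> d (Suc j)" using p Suc.prems unfolding is_partition_def by simp
      ultimately show ?thesis by simp
    qed simp
  qed simp
  show ?thesis using mono[of 0 i] mono[of i n] assms p by (auto simp: is_partition_def)
qed

lemma arc_partition:
  assumes p: "is_partition 0 1 d n" and bdd: "bdd_above (polygon_lengths g 0 1)"
  shows "\<forall>i<n. bdd_above (polygon_lengths g (d i) (d (Suc i)))"
        "(\<Sum>i<n. arc_length g (d i) (d (Suc i))) \<le> arc_length g 0 1"
proof -
  have mono: "d i \<le> d j" if "i \<le> j" "j \<le> n" for i j
    using that
  proof (induction j)
    case (Suc j)
    show ?case
    proof (cases "i = Suc j")
      case False
      then have "i \<le> j" using Suc.prems by simp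
      then have "d i \<le> d j" using Suc by simp
      moreover have "d j \<le> d (Suc j)" using p Suc.prems unfolding is_partition_def by simp
      ultimately show ?thesis by simp
    qed simp
  qed simp
  have d0: "d 0 = 0" and dn: "d n = 1" using p by (auto simp: is_partition_def)
  have rng: "0 \<le> d i \<and> d i \<le> 1" if "i \<le> n" for i using mono[of 0 i] mono[of i n] that d0 dn by auto
  have bk: "bdd_above (polygon_lengths g (d k) 1)" if "k \<le> n" for k
    using poly_split(2)[of 0 "d k" 1 g] rng[OF that] bdd by auto
  have b0: "bdd_above (polygon_lengths g 0 (d k))" if "k \<le> n" for k
    using poly_split(1)[of 0 "d k" 1 g] rng[OF that] bdd by auto
  show bi: "\<forall>i<n. bdd_above (polygon_lengths g (d i) (d (Suc i)))"
  proof (intro allI impI)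
    fix i assume "i < n"
    then show "bdd_above (polygon_lengths g (d i) (d (Suc i)))"
      using poly_split(1)[OF mono[of i "Suc i"] _ bk[of i]] rng[of "Suc i"] by auto
  qed
  have "k \<le> n \<longrightarrow> (\<Sum>i<k. arc_length g (d i) (d (Suc i))) \<le> arc_length g 0 (d k)" for k
  proof (induction k)
    case 0
    then show ?case using d0 b0[of 0] arc_ge_dist[of 0 0 g] by simp
  next
    case (Suc k)
    show ?case
    proof
      assume sk: "Suc k \<le> n"
      then have IH: "(\<Sum>i<k. arc_length g (d i) (d (Suc i))) \<le> arc_length g 0 (d k)" using Suc by auto
      have "arc_length g 0 (d k) + arc_length g (d k) (d (Suc k)) \<le> arc_length g 0 (d (Suc k))"
        using poly_split(3)[of 0 "d k" "d (Suc k)" g] rng[of k] mono[of k "Suc k"] b0[OF sk] sk by auto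
      then show "(\<Sum>i<Suc k. arc_length g (d i) (d (Suc i))) \<le> arc_length g 0 (d (Suc k))"
        using IH by simp
    qed
  qed
  from this[of n] show "(\<Sum>i<n. arc_length g (d i) (d (Suc i))) \<le> arc_length g 0 1" using dn by simp
qed

lemma qh_lower:
  fixes G :: "'a::euclidean_space set" and g :: "real \<Rightarrow> 'a" and h :: "'a \<Rightarrow> real"
  assumes rp: "rectifiable_path g" and img: "path_image g \<subseteq> G"
    and pos: "\<forall>z\<in>G. bdist G z > 0"
    and lip: "\<forall>z\<in>G. \<forall>e>0. \<exists>\<delta>>0. \<forall>w\<in>ball z \<delta>. \<forall>w'\<in>ball z \<delta>.
                 \<bar>h w - h w'\<bar> \<le> (1 / bdist G z + e) * dist w w'"
  shows "h (pathfinish g) - h (pathstart g) \<le> qh_length G g"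
proof -
  define W where "W = (\<lambda>z. 1 / bdist G z)"
  define K where "K = path_image g"
  have pg: "path g" and bdd: "bdd_above (polygon_lengths g 0 1)" using rp by (auto simp: rectifiable_path_def)
  have cK: "compact K" unfolding K_def using pg by (rule compact_path_image)
  have W0: "0 \<le> W z" for z unfolding W_def bdist_def by (simp add: infdist_nonneg)
  have contI: "isCont (\<lambda>z. infdist z (frontier G)) z" for z
    using continuous_on_infdist[OF continuous_on_id, of UNIV "frontier G"]
    by (simp add: continuous_on_eq_continuous_at)
  have contW: "isCont W z" if "z \<in> G" for z
    unfolding W_def bdist_def using pos that contI[of z]
    by (intro continuous_intros) (auto simp: bdist_def)
  have KG: "K \<subseteq> G" using img K_def by simp
  have "continuous_on K W" using contW KG by (intro continuous_at_imp_continuous_on) auto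
  then have "bounded (W ` K)" using cK by (intro compact_imp_bounded compact_continuous_image)
  then obtain M where M: "M > 0" "\<forall>z\<in>K. W z \<le> M"
    unfolding bounded_pos by (auto simp: W0)
  have gK: "g t \<in> K" if "0 \<le> t" "t \<le> 1" for t
    using that unfolding K_def path_image_def by auto
  define Lt where "Lt = arc_length g 0 1"
  have Lt0: "0 \<le> Lt" unfolding Lt_def using arc_ge_dist[of 0 1 g] poly_split(1)[of 0 1 1 g] bdd
    by (smt (verit) norm_ge_zero)
  define QS where "QS = {\<Sum>i<n. (INF t\<in>{d i..d (Suc i)}. 1 / bdist G (g t)) * arc_length g (d i) (d (Suc i))
                        | d n. is_partition 0 1 d n}"
  have INFle: "(INF t\<in>{a..b}. 1 / bdist G (g t)) \<le> W (g a)" if "a \<le> b" for a b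
    using that W0 unfolding W_def
    by (intro cINF_lower) (auto intro!: bdd_belowI[where m=0])
  have QSbdd: "bdd_above QS"
  proof (rule bdd_aboveI[where M="M * Lt"])
    fix s assume "s \<in> QS"
    then obtain d n where p: "is_partition 0 1 d n" and s:
      "s = (\<Sum>i<n. (INF t\<in>{d i..d (Suc i)}. 1 / bdist G (g t)) * arc_length g (d i) (d (Suc i)))"
      unfolding QS_def by blast
    note ap = arc_partition[OF p bdd]
    have "s \<le> (\<Sum>i<n. M * arc_length g (d i) (d (Suc i)))"
      unfolding s
    proof (rule sum_mono)
      fix i assume i: "i \<in> {..<n}"
      have r: "0 \<le> d i" "d i \<le> 1" using partition_range[OF p, of i] i by auto
      have m: "d i \<le> d (Suc i)" using p i by (auto simp: is_partition_def)
      have a0: "0 \<le> arc_length g (d i) (d (Suc i))"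
        using arc_ge_dist[OF m] ap(1) i by (smt (verit) lessThan_iff norm_ge_zero)
      have "(INF t\<in>{d i..d (Suc i)}. 1 / bdist G (g t)) \<le> M"
        using INFle[OF m] M(2) gK[OF r] by (meson order_trans)
      then show "(INF t\<in>{d i..d (Suc i)}. 1 / bdist G (g t)) * arc_length g (d i) (d (Suc i))
                 \<le> M * arc_length g (d i) (d (Suc i))" using a0 by (rule mult_right_mono)
    qed
    also have "\<dots> = M * (\<Sum>i<n. arc_length g (d i) (d (Suc i)))" by (simp add: sum_distrib_left)
    also have "\<dots> \<le> M * Lt" using ap(2) M(1) unfolding Lt_def by simp
    finally show "s \<le> M * Lt" .
  qed
  have qh: "qh_length G g = Sup QS" unfolding qh_length_def QS_def by simp
  have main: "h (g 1) - h (g 0) \<le> Sup QS + e * (2 * Lt)" if e: "e > 0" for e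
  proof -
    have "\<forall>z\<in>K. \<exists>r>0. (\<forall>w\<in>ball z r. \<forall>w'\<in>ball z r. \<bar>h w - h w'\<bar> \<le> (W z + e) * dist w w')
                      \<and> (\<forall>w\<in>ball z r. W z - e \<le> W w)"
    proof
      fix z assume z: "z \<in> K"
      then have zG: "z \<in> G" using KG by auto
      obtain \<delta> where \<delta>: "\<delta> > 0" "\<forall>w\<in>ball z \<delta>. \<forall>w'\<in>ball z \<delta>. \<bar>h w - h w'\<bar> \<le> (W z + e) * dist w w'"
        using lip zG e unfolding W_def by blast
      obtain \<delta>' where \<delta>': "\<delta>' > 0" "\<forall>w. dist w z < \<delta>' \<longrightarrow> dist (W w) (W z) < e"
        using contW[OF zG] e unfolding continuous_at_eps_delta by blast
      have "\<forall>w\<in>ball z \<delta>'. W z - e \<le> W w"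
      proof
        fix w assume "w \<in> ball z \<delta>'"
        then have "dist w z < \<delta>'" by (simp add: dist_commute)
        then have "\<bar>W w - W z\<bar> < e" using \<delta>'(2) by (simp add: dist_real_def)
        then show "W z - e \<le> W w" by linarith
      qed
      then show "\<exists>r>0. (\<forall>w\<in>ball z r. \<forall>w'\<in>ball z r. \<bar>h w - h w'\<bar> \<le> (W z + e) * dist w w')
                      \<and> (\<forall>w\<in>ball z r. W z - e \<le> W w)"
        using \<delta> \<delta>' by (intro exI[where x="min \<delta> \<delta>'"]) auto
    qed
    then obtain R where R: "\<And>z. z \<in> K \<Longrightarrow> R z > 0"
      "\<And>z. z \<in> K \<Longrightarrow> \<forall>w\<in>ball z (R z). \<forall>w'\<in>ball z (R z). \<bar>h w - h w'\<bar> \<le> (W z + e) * dist w w'"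
      "\<And>z. z \<in> K \<Longrightarrow> \<forall>w\<in>ball z (R z). W z - e \<le> W w"
      by metis
    have cov: "K \<subseteq> \<Union>((\<lambda>z. ball z (R z)) ` K)" using R(1) by force
    obtain \<eta> where \<eta>: "\<eta> > 0" "\<And>x. x \<in> K \<Longrightarrow> \<exists>B \<in> (\<lambda>z. ball z (R z)) ` K. ball x \<eta> \<subseteq> B"
      using Heine_Borel_lemma[OF cK cov] by blast
    have "uniformly_continuous_on {0..1} g" using pg unfolding path_def
      by (intro compact_uniformly_continuous) auto
    then obtain \<rho> where \<rho>: "\<rho> > 0" "\<forall>x\<in>{0..1}. \<forall>x'\<in>{0..1}. dist x' x < \<rho> \<longrightarrow> dist (g x') (g x) < \<eta>"
      unfolding uniformly_continuous_on_def using \<eta>(1) by blast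
    obtain N :: nat where N: "N > 0" "inverse (real N) < \<rho>" using ex_inverse_of_nat_less[OF \<rho>(1)] by blast
    define d where "d = (\<lambda>i::nat. real i / real N)"
    have p: "is_partition 0 1 d N" using N unfolding is_partition_def d_def
      by (auto simp: divide_right_mono)
    note ap = arc_partition[OF p bdd]
    define INFi where "INFi = (\<lambda>i. (INF t\<in>{d i..d (Suc i)}. 1 / bdist G (g t)))"
    define ARC where "ARC = (\<lambda>i. arc_length g (d i) (d (Suc i)))"
    have step: "h (g (d (Suc i))) - h (g (d i)) \<le> (INFi i + 2 * e) * ARC i" if i: "i < N" for i
    proof -
      have r: "0 \<le> d i" "d i \<le> 1" "0 \<le> d (Suc i)" "d (Suc i) \<le> 1"
        using partition_range[OF p, of i] partition_range[OF p, of "Suc i"] i by auto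
      have m: "d i \<le> d (Suc i)" using p i by (auto simp: is_partition_def)
      obtain z where zK: "z \<in> K" and sub: "ball (g (d i)) \<eta> \<subseteq> ball z (R z)"
        using \<eta>(2)[OF gK[OF r(1,2)]] by blast
      have inb: "g t \<in> ball z (R z)" if t: "t \<in> {d i..d (Suc i)}" for t
      proof -
        have "dist t (d i) \<le> d (Suc i) - d i" using t by (auto simp: dist_real_def)
        also have "\<dots> = inverse (real N)" unfolding d_def using N by (simp add: field_simps)
        finally have "dist t (d i) < \<rho>" using N by simp
        then have "dist (g t) (g (d i)) < \<eta>" using \<rho>(2) t r by auto
        then show ?thesis using sub by (auto simp: dist_commute)
      qed
      have e1: "g (d i) \<in> ball z (R z)" "g (d (Suc i)) \<in> ball z (R z)" using inb m by auto
      have a0: "norm (g (d (Suc i)) - g (d i)) \<le> ARC i"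
        unfolding ARC_def using ap(1) i arc_ge_dist[OF m, of g] by simp
      have INFge: "W z - e \<le> INFi i" unfolding INFi_def
        using R(3)[OF zK] inb m unfolding W_def by (intro cINF_greatest) auto
      have "h (g (d (Suc i))) - h (g (d i)) \<le> (W z + e) * dist (g (d (Suc i))) (g (d i))"
        using R(2)[OF zK] e1 by force
      also have "\<dots> \<le> (W z + e) * ARC i"
        using a0 W0[of z] e by (intro mult_left_mono) (auto simp: dist_norm)
      also have "\<dots> \<le> (INFi i + 2 * e) * ARC i"
        using INFge a0 by (intro mult_right_mono) (auto intro: order_trans[OF norm_ge_zero])
      finally show ?thesis .
    qed
    have "h (g 1) - h (g 0) = (\<Sum>i<N. h (g (d (Suc i))) - h (g (d i)))"
      using sum_lessThan_telescope[of "\<lambda>i. h (g (d i))" N] p by (simp add: is_partition_def)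
    also have "\<dots> \<le> (\<Sum>i<N. (INFi i + 2 * e) * ARC i)" using step by (intro sum_mono) auto
    also have "\<dots> = (\<Sum>i<N. INFi i * ARC i) + 2 * e * (\<Sum>i<N. ARC i)"
      by (simp add: algebra_simps sum.distrib sum_distrib_left)
    also have "(\<Sum>i<N. INFi i * ARC i) \<le> Sup QS"
      by (rule cSup_upper[OF _ QSbdd]) (use p in \<open>auto simp: QS_def INFi_def ARC_def\<close>)
    also have "(\<Sum>i<N. ARC i) \<le> Lt" using ap(2) unfolding ARC_def Lt_def .
    finally show ?thesis using e by (simp add: mult.commute mult.left_commute) 
  qed
  have "h (g 1) - h (g 0) \<le> Sup QS"
  proof (rule field_le_epsilon)
    fix e :: real assume e: "e > 0"
    have "h (g 1) - h (g 0) \<le> Sup QS + (e / (2 * Lt + 1)) * (2 * Lt)"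
      using main[of "e / (2 * Lt + 1)"] e Lt0 by simp
    also have "(e / (2 * Lt + 1)) * (2 * Lt) \<le> e" using e Lt0 by (simp add: field_simps)
    finally show "h (g 1) - h (g 0) \<le> Sup QS + e" by simp
  qed
  then show ?thesis unfolding qh pathstart_def pathfinish_def .
qed

definition Sq :: "complex \<Rightarrow> complex" where "Sq z = csqrt (1 - z\<^sup>2)"
definition uA :: "complex \<Rightarrow> complex" where "uA z = z + \<i> * Sq z"
definition cA :: "complex \<Rightarrow> real" where "cA z = Re (Ln (uA z))"
definition cT1 :: "complex \<Rightarrow> real" where "cT1 z = Im (Ln (z - 1))"
definition cT2 :: "complex \<Rightarrow> real" where "cT2 z = - Im (Ln (-1 - z))"
definition mm :: "complex \<Rightarrow> real" where "mm z = min (cA z) (min (cT1 z) (cT2 z))"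
definition fc :: "complex \<Rightarrow> real" where
  "fc z = (if Im z > 0 then mm z else if Im z < 0 then - mm (cnj z) else 0)"
definition Dc :: "complex \<Rightarrow> real" where "Dc z = 1 / min (cmod (z - 1)) (cmod (z + 1))"

lemma uA_deriv:
  assumes "1 - z\<^sup>2 \<notin> \<real>\<^sub>\<le>\<^sub>0"
  shows "(uA has_field_derivative (1 - \<i> * z / Sq z)) (at z)"
proof -
  have d1: "((\<lambda>z. 1 - z\<^sup>2) has_field_derivative - (2 * z)) (at z)" by (auto intro!: derivative_eq_intros)
  have "((\<lambda>z. csqrt (1 - z\<^sup>2)) has_field_derivative (inverse (2 * csqrt (1 - z\<^sup>2)) * (- (2 * z)))) (at z)"
    by (rule DERIV_chain2[OF has_field_derivative_csqrt[OF assms] d1])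
  then have "(uA has_field_derivative (1 + \<i> * (inverse (2 * csqrt (1 - z\<^sup>2)) * (- (2 * z))))) (at z)"
    unfolding uA_def Sq_def by (intro DERIV_add DERIV_ident DERIV_cmult)
  moreover have "1 + \<i> * (inverse (2 * csqrt (1 - z\<^sup>2)) * (- (2 * z))) = 1 - \<i> * z / Sq z"
  proof -
    have "inverse (2 * csqrt (1 - z\<^sup>2)) * (- (2 * z)) = - (z / csqrt (1 - z\<^sup>2))"
      by (cases "csqrt (1 - z\<^sup>2) = 0") (simp_all add: field_simps)
    then show ?thesis unfolding Sq_def by simp
  qed
  ultimately show ?thesis by simp
qed

lemma Sq_nz: "z\<^sup>2 \<noteq> 1 \<Longrightarrow> Sq z \<noteq> 0"
proof
  assume a: "z\<^sup>2 \<noteq> 1" "Sq z = 0"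
  then have "(Sq z)\<^sup>2 = 0" by simp
  then have "1 - z\<^sup>2 = 0" unfolding Sq_def by simp
  then show False using a by simp
qed

lemma lnA_deriv:
  assumes "1 - z\<^sup>2 \<notin> \<real>\<^sub>\<le>\<^sub>0" "uA z \<notin> \<real>\<^sub>\<le>\<^sub>0"
  shows "((\<lambda>z. Ln (uA z)) has_field_derivative (- \<i> / Sq z)) (at z)"
proof -
  have z2: "z\<^sup>2 \<noteq> 1" using assms(1) by auto
  have S: "Sq z \<noteq> 0" using Sq_nz[OF z2] .
  have u: "uA z \<noteq> 0" using assms(2) by auto
  have "((\<lambda>z. Ln (uA z)) has_field_derivative (inverse (uA z) * (1 - \<i> * z / Sq z))) (at z)"
    by (rule DERIV_chain2[OF has_field_derivative_Ln[OF assms(2)] uA_deriv[OF assms(1)]])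
  moreover have "inverse (uA z) * (1 - \<i> * z / Sq z) = - \<i> / Sq z"
  proof -
    have "uA z * (- \<i> / Sq z) = 1 - \<i> * z / Sq z"
      using S unfolding uA_def by (simp add: field_simps)
    then show ?thesis using u by (simp add: field_simps)
  qed
  ultimately show ?thesis by simp
qed

lemma Dc_bound_A:
  assumes "z \<noteq> 1" "z \<noteq> -1"
  shows "cmod (- \<i> / Sq z) \<le> Dc z"
proof -
  define m where "m = min (cmod (z - 1)) (cmod (z + 1))"
  have m0: "m > 0" using assms unfolding m_def by (auto simp: add_eq_0_iff minus_equation_iff)
  have "cmod (1 - z\<^sup>2) = cmod (z - 1) * cmod (z + 1)"
    by (simp add: power2_eq_square norm_mult[symmetric] algebra_simps norm_minus_commute)
  also have "\<dots> \<ge> m * m" unfolding m_def by (intro mult_mono) auto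
  finally have "m * m \<le> cmod (1 - z\<^sup>2)" .
  then have "sqrt (m * m) \<le> sqrt (cmod (1 - z\<^sup>2))" by (rule real_sqrt_le_mono)
  then have "m \<le> cmod (Sq z)" using m0 unfolding Sq_def by simp
  then have "1 / cmod (Sq z) \<le> 1 / m" using m0 by (intro divide_left_mono) (auto intro!: mult_pos_pos)
  then show ?thesis unfolding Dc_def m_def[symmetric] by (simp add: norm_divide)
qed

lemma T1_deriv:
  assumes "z - 1 \<notin> \<real>\<^sub>\<le>\<^sub>0"
  shows "((\<lambda>z. Ln (z - 1)) has_field_derivative inverse (z - 1)) (at z)"
proof -
  have d1: "((\<lambda>z. z - 1) has_field_derivative 1) (at z)" by (auto intro!: derivative_eq_intros)
  show ?thesis using DERIV_chain2[OF has_field_derivative_Ln[OF assms] d1] by simp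
qed

lemma T2_deriv:
  assumes "-1 - z \<notin> \<real>\<^sub>\<le>\<^sub>0"
  shows "((\<lambda>z. - Ln (-1 - z)) has_field_derivative inverse (-1 - z)) (at z)"
proof -
  have d1: "((\<lambda>z. -1 - z) has_field_derivative -1) (at z)" by (auto intro!: derivative_eq_intros)
  have "((\<lambda>z. Ln (-1 - z)) has_field_derivative inverse (-1 - z) * -1) (at z)"
    using DERIV_chain2[OF has_field_derivative_Ln[OF assms] d1] by simp
  then show ?thesis using DERIV_minus by fastforce
qed

lemma Dc_bound_T1: "z \<noteq> 1 \<Longrightarrow> z \<noteq> -1 \<Longrightarrow> cmod (inverse (z - 1)) \<le> Dc z"
proof -
  assume a: "z \<noteq> 1" "z \<noteq> -1"
  have p1: "cmod (z + 1) > 0" using a by (auto simp: add_eq_0_iff minus_equation_iff)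
  have p2: "cmod (z - 1) > 0" using a by auto
  have "1 / cmod (z - 1) \<le> 1 / min (cmod (z - 1)) (cmod (z + 1))"
    using p1 p2 by (intro divide_left_mono) auto
  moreover have "cmod (inverse (z - 1)) = 1 / cmod (z - 1)"
    by (simp only: norm_inverse) (simp add: divide_inverse)
  ultimately show ?thesis unfolding Dc_def by simp
qed

lemma Dc_bound_T2: "z \<noteq> 1 \<Longrightarrow> z \<noteq> -1 \<Longrightarrow> cmod (inverse (-1 - z)) \<le> Dc z"
proof -
  assume a: "z \<noteq> 1" "z \<noteq> -1"
  have e: "cmod (-1 - z) = cmod (z + 1)" by (metis minus_diff_eq norm_minus_cancel diff_minus_eq_add)
  have p1: "cmod (z + 1) > 0" using a by (auto simp: add_eq_0_iff minus_equation_iff)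
  have p2: "cmod (z - 1) > 0" using a by auto
  have "1 / cmod (z + 1) \<le> 1 / min (cmod (z - 1)) (cmod (z + 1))"
    using p1 p2 by (intro divide_left_mono) auto
  moreover have "cmod (inverse (-1 - z)) = 1 / cmod (z + 1)"
    by (simp only: norm_inverse e) (simp add: divide_inverse)
  ultimately show ?thesis unfolding Dc_def by simp
qed

lemma U_nonpos1: assumes "Im z > 0" shows "1 - z\<^sup>2 \<notin> \<real>\<^sub>\<le>\<^sub>0"
proof
  assume "1 - z\<^sup>2 \<in> \<real>\<^sub>\<le>\<^sub>0"
  then have a: "Im (1 - z\<^sup>2) = 0" "Re (1 - z\<^sup>2) \<le> 0" by (auto simp: complex_nonpos_Reals_iff)
  from a(1) have "Re z * Im z = 0" by (auto simp: power2_eq_square)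
  then have "Re z = 0" using assms by simp
  with a(2) show False using assms by (simp add: power2_eq_square) (smt (verit) zero_less_mult_iff)
qed

lemma Im_uA: "Im (uA z) = Im z + Re (Sq z)"
  unfolding uA_def by simp

lemma U_uA: assumes "Im z > 0" shows "Im (uA z) > 0" "uA z \<notin> \<real>\<^sub>\<le>\<^sub>0" "uA z \<noteq> 0"
proof -
  show i: "Im (uA z) > 0" using assms Re_csqrt[of "1 - z\<^sup>2"] unfolding Im_uA Sq_def by linarith
  then show "uA z \<notin> \<real>\<^sub>\<le>\<^sub>0" by (auto simp: complex_nonpos_Reals_iff)
  show "uA z \<noteq> 0" using i by auto
qed

lemma U_T: assumes "Im z > 0" shows "z - 1 \<notin> \<real>\<^sub>\<le>\<^sub>0" "-1 - z \<notin> \<real>\<^sub>\<le>\<^sub>0" "z \<noteq> 1" "z \<noteq> -1"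
  using assms by (auto simp: complex_nonpos_Reals_iff)

lemma uA_eq: "(uA z)\<^sup>2 - 2 * z * uA z + 1 = 0"
proof -
  have "(Sq z)\<^sup>2 = 1 - z\<^sup>2" unfolding Sq_def by simp
  then show ?thesis unfolding uA_def by (simp add: power2_eq_square algebra_simps)
qed

lemma U_cA: assumes "Im z > 0" shows "cA z \<ge> 0"
proof -
  define u where "u = uA z"
  have iu: "Im u > 0" and u0: "u \<noteq> 0" using U_uA[OF assms] unfolding u_def by auto
  have "cmod u \<ge> 1"
  proof (rule ccontr)
    assume "\<not> cmod u \<ge> 1"
    then have c1: "cmod u < 1" by simp
    define r where "r = (Re u)\<^sup>2 + (Im u)\<^sup>2"
    have r: "r = (cmod u)\<^sup>2" unfolding r_def by (simp add: cmod_power2)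
    have r1: "r < 1" unfolding r using c1 by (simp add: power_less_one_iff abs_less_iff)
    have r0: "r > 0" unfolding r_def using iu by (smt (verit) zero_less_power2 zero_le_power2)
    have "u * (2 * z) = u\<^sup>2 + 1" using uA_eq[of z] unfolding u_def[symmetric] by (simp add: algebra_simps)
    then have "2 * z = u + inverse u" using u0 by (simp add: field_simps power2_eq_square)
    then have "Im (2 * z) = Im (u + inverse u)" by simp
    then have "2 * Im z = Im u - Im u / r" unfolding r_def by simp
    moreover have "Im u / r > Im u" using r0 r1 iu by (simp add: less_divide_eq)
    ultimately show False using assms by linarith
  qed
  then show ?thesis unfolding cA_def u_def[symmetric] using u0 by simp
qed

lemma U_cT1: assumes "Im z > 0" shows "cT1 z \<ge> 0"
  unfolding cT1_def using Im_Ln_pos_lt_imp[of "z - 1"] assms by simp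

lemma U_cT2: assumes "Im z > 0" shows "cT2 z \<ge> 0"
proof -
  have "Im (-1 - z) < 0" using assms by simp
  then have n: "-1 - z \<noteq> 0" by (auto simp del: minus_diff_eq diff_minus_eq_add)
  have "\<not> (0 \<le> Im (Ln (-1 - z)) \<and> Im (Ln (-1 - z)) \<le> pi)"
    using Im_Ln_pos_le[OF n] assms by simp
  moreover have "Im (Ln (-1 - z)) \<le> pi" by (rule Im_Ln_le_pi[OF n])
  ultimately show ?thesis unfolding cT2_def by simp
qed

lemma U_mm: assumes "Im z > 0" shows "mm z \<ge> 0"
  unfolding mm_def using U_cA[OF assms] U_cT1[OF assms] U_cT2[OF assms] by simp

lemma lip_of_deriv:
  assumes "convex S" "\<And>w. w \<in> S \<Longrightarrow> (F has_field_derivative F' w) (at w)"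
    "\<And>w. w \<in> S \<Longrightarrow> cmod (F' w) \<le> B" "x \<in> S" "y \<in> S"
  shows "\<bar>Re (F x) - Re (F y)\<bar> \<le> B * cmod (x - y)" "\<bar>Im (F x) - Im (F y)\<bar> \<le> B * cmod (x - y)"
proof -
  have "cmod (F x - F y) \<le> B * cmod (x - y)"
    by (rule field_differentiable_bound[OF assms(1) has_field_derivative_at_within[OF assms(2)] assms(3) assms(4,5)])
  then show "\<bar>Re (F x) - Re (F y)\<bar> \<le> B * cmod (x - y)" "\<bar>Im (F x) - Im (F y)\<bar> \<le> B * cmod (x - y)"
    using abs_Re_le_cmod[of "F x - F y"] abs_Im_le_cmod[of "F x - F y"] by auto
qed

lemma min_lip: "\<bar>a - c\<bar> \<le> (K::real) \<Longrightarrow> \<bar>b - d\<bar> \<le> K \<Longrightarrow> \<bar>min a b - min c d\<bar> \<le> K"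
  by (auto simp: min_def abs_le_iff)

lemma cA_lip:
  assumes "convex S" "\<And>w. w \<in> S \<Longrightarrow> 1 - w\<^sup>2 \<notin> \<real>\<^sub>\<le>\<^sub>0 \<and> uA w \<notin> \<real>\<^sub>\<le>\<^sub>0 \<and> w \<noteq> 1 \<and> w \<noteq> -1 \<and> Dc w \<le> L"
    "x \<in> S" "y \<in> S"
  shows "\<bar>cA x - cA y\<bar> \<le> L * cmod (x - y)"
  unfolding cA_def
  by (rule lip_of_deriv(1)[OF assms(1) lnA_deriv _ assms(3,4)])
     (use assms(2) Dc_bound_A in \<open>force+\<close>)

lemma cT1_lip:
  assumes "convex S" "\<And>w. w \<in> S \<Longrightarrow> w - 1 \<notin> \<real>\<^sub>\<le>\<^sub>0 \<and> w \<noteq> 1 \<and> w \<noteq> -1 \<and> Dc w \<le> L"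
    "x \<in> S" "y \<in> S"
  shows "\<bar>cT1 x - cT1 y\<bar> \<le> L * cmod (x - y)"
  unfolding cT1_def
  by (rule lip_of_deriv(2)[OF assms(1) T1_deriv _ assms(3,4)])
     (use assms(2) Dc_bound_T1 in \<open>force+\<close>)

lemma cT2_lip:
  assumes "convex S" "\<And>w. w \<in> S \<Longrightarrow> -1 - w \<notin> \<real>\<^sub>\<le>\<^sub>0 \<and> w \<noteq> 1 \<and> w \<noteq> -1 \<and> Dc w \<le> L"
    "x \<in> S" "y \<in> S"
  shows "\<bar>cT2 x - cT2 y\<bar> \<le> L * cmod (x - y)"
proof -
  have "\<bar>Im (- Ln (-1 - x)) - Im (- Ln (-1 - y))\<bar> \<le> L * cmod (x - y)"
    by (rule lip_of_deriv(2)[OF assms(1) T2_deriv _ assms(3,4)])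
       (use assms(2) Dc_bound_T2 in \<open>force+\<close>)
  then show ?thesis unfolding cT2_def by simp
qed

lemma mm_lip:
  assumes "convex S" "\<And>w. w \<in> S \<Longrightarrow> Im w > 0 \<and> Dc w \<le> L" "x \<in> S" "y \<in> S"
  shows "\<bar>mm x - mm y\<bar> \<le> L * cmod (x - y)"
proof -
  have "\<bar>cA x - cA y\<bar> \<le> L * cmod (x - y)"
    using assms(2) U_nonpos1 U_uA U_T by (intro cA_lip[OF assms(1) _ assms(3,4)]) blast
  moreover have "\<bar>cT1 x - cT1 y\<bar> \<le> L * cmod (x - y)"
    using assms(2) U_T by (intro cT1_lip[OF assms(1) _ assms(3,4)]) blast
  moreover have "\<bar>cT2 x - cT2 y\<bar> \<le> L * cmod (x - y)"
    using assms(2) U_T by (intro cT2_lip[OF assms(1) _ assms(3,4)]) blast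
  ultimately show ?thesis unfolding mm_def by (intro min_lip)
qed

lemma cont_ball:
  assumes "isCont f p" "open V" "f p \<in> V"
  shows "\<exists>\<delta>>0. \<forall>w\<in>ball p \<delta>. f w \<in> V"
proof -
  have "eventually (\<lambda>w. f w \<in> V) (at p)"
    using assms unfolding isCont_def by (rule topological_tendstoD)
  then obtain d where d: "d > 0" "\<forall>x. x \<noteq> p \<and> dist x p < d \<longrightarrow> f x \<in> V"
    unfolding eventually_at by auto
  show ?thesis
    using d assms(3) by (intro exI[where x=d]) (auto simp: dist_commute)
qed

lemma cnj_real_dist: "Im p = 0 \<Longrightarrow> cmod (cnj w - p) = cmod (w - p)"
proof -
  assume "Im p = 0"
  then have "cnj p = p" by (simp add: complex_eq_iff)
  then have e: "cnj w - p = cnj (w - p)" by (simp only: complex_cnj_diff)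
  show ?thesis by (simp only: e complex_mod_cnj)
qed

lemma axis_comb:
  fixes H :: "complex \<Rightarrow> real"
  assumes z0: "Im z0 = 0" and L: "L \<ge> 0"
   and Hlip: "\<forall>w\<in>ball z0 \<delta>. \<forall>w'\<in>ball z0 \<delta>. \<bar>H w - H w'\<bar> \<le> L * cmod (w - w')"
   and Hzero: "\<forall>w\<in>ball z0 \<delta>. Im w = 0 \<longrightarrow> H w = 0"
   and mmH: "\<forall>w\<in>ball z0 \<delta>. Im w > 0 \<longrightarrow> mm w \<le> H w"
   and mmlip: "\<forall>w\<in>ball z0 \<delta>. \<forall>w'\<in>ball z0 \<delta>. Im w > 0 \<longrightarrow> Im w' > 0 \<longrightarrow> \<bar>mm w - mm w'\<bar> \<le> L * cmod (w - w')"
  shows "\<forall>w\<in>ball z0 \<delta>. \<forall>w'\<in>ball z0 \<delta>. \<bar>fc w - fc w'\<bar> \<le> L * cmod (w - w')"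
proof -
  have cb: "cnj w \<in> ball z0 \<delta>" if "w \<in> ball z0 \<delta>" for w
    using that cnj_real_dist[OF z0, of w] by (simp add: dist_norm norm_minus_commute)
  have bound0: "\<bar>fc w\<bar> \<le> L * cmod (w - p)" if w: "w \<in> ball z0 \<delta>" and p: "p \<in> ball z0 \<delta>" "Im p = 0" for w p
  proof -
    consider "Im w > 0" | "Im w < 0" | "Im w = 0" by linarith
    then show ?thesis
    proof cases
      case 1
      have "0 \<le> mm w" using U_mm[OF 1] .
      moreover have "mm w \<le> H w - H p" using mmH w 1 Hzero p by auto
      moreover have "H w - H p \<le> L * cmod (w - p)" using Hlip w p by force
      ultimately show ?thesis using 1 by (simp add: fc_def)
    next
      case 2
      then have i: "Im (cnj w) > 0" by simp
      have "0 \<le> mm (cnj w)" using U_mm[OF i] .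
      moreover have "mm (cnj w) \<le> H (cnj w) - H p" using mmH cb[OF w] i Hzero p by auto
      moreover have "H (cnj w) - H p \<le> L * cmod (cnj w - p)" using Hlip cb[OF w] p by force
      ultimately show ?thesis using 2 cnj_real_dist[OF p(2), of w] by (simp add: fc_def)
    next
      case 3
      then show ?thesis using L by (simp add: fc_def)
    qed
  qed
  have cross: "\<bar>fc w - fc w'\<bar> \<le> L * cmod (w - w')"
    if w: "w \<in> ball z0 \<delta>" "w' \<in> ball z0 \<delta>" and s: "Im w > 0" "Im w' < 0" for w w'
  proof -
    define t where "t = Im w / (Im w - Im w')"
    have t: "0 < t" "t < 1" using s unfolding t_def by (auto simp: divide_less_eq)
    define p where "p = (1 - t) *\<^sub>R w + t *\<^sub>R w'"
    have pb: "p \<in> ball z0 \<delta>" unfolding p_def using t w by (intro convexD[OF convex_ball]) auto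
    have "Im p = (1 - t) * Im w + t * Im w'" unfolding p_def by simp
    also have "\<dots> = 0" unfolding t_def using s by (simp add: field_simps)
    finally have ip: "Im p = 0" .
    have d1: "cmod (w - p) = t * cmod (w - w')"
    proof -
      have "w - p = t *\<^sub>R (w - w')" unfolding p_def by (simp add: algebra_simps)
      then show ?thesis using t by simp
    qed
    have d2: "cmod (w' - p) = (1 - t) * cmod (w - w')"
    proof -
      have "w' - p = (1 - t) *\<^sub>R (w' - w)" unfolding p_def by (simp add: algebra_simps)
      then show ?thesis using t by (simp add: norm_minus_commute)
    qed
    have "\<bar>fc w - fc w'\<bar> \<le> \<bar>fc w\<bar> + \<bar>fc w'\<bar>" by simp
    also have "\<dots> \<le> L * cmod (w - p) + L * cmod (w' - p)"
      using bound0[OF w(1) pb ip] bound0[OF w(2) pb ip] by simp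
    also have "\<dots> = L * cmod (w - w')" unfolding d1 d2 by (simp add: algebra_simps)
    finally show ?thesis .
  qed
  show ?thesis
  proof (intro ballI)
    fix w w' assume w: "w \<in> ball z0 \<delta>" "w' \<in> ball z0 \<delta>"
    consider "Im w > 0" "Im w' > 0" | "Im w < 0" "Im w' < 0" | "Im w = 0" | "Im w' = 0"
      | "Im w > 0" "Im w' < 0" | "Im w < 0" "Im w' > 0" by linarith
    then show "\<bar>fc w - fc w'\<bar> \<le> L * cmod (w - w')"
    proof cases
      case 1 then show ?thesis using mmlip w by (simp add: fc_def)
    next
      case 2
      have "\<bar>mm (cnj w') - mm (cnj w)\<bar> \<le> L * cmod (cnj w' - cnj w)"
        using mmlip cb w 2 by simp
      moreover have "cmod (cnj w' - cnj w) = cmod (w - w')"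
        by (metis complex_cnj_diff complex_mod_cnj norm_minus_commute)
      ultimately show ?thesis using 2 by (simp add: fc_def)
    next
      case 3 then show ?thesis using bound0[OF w(2) w(1) 3] by (simp add: fc_def norm_minus_commute)
    next
      case 4 then show ?thesis using bound0[OF w(1) w(2) 4] by (simp add: fc_def)
    next
      case 5 then show ?thesis using cross w by blast
    next
      case 6 then show ?thesis using cross[OF w(2) w(1)] by (simp add: abs_minus_commute norm_minus_commute)
    qed
  qed
qed

lemma Dc_cnj: "Dc (cnj v) = Dc v"
proof -
  have "cnj v - 1 = cnj (v - 1)" "cnj v + 1 = cnj (v + 1)" by simp_all
  then show ?thesis unfolding Dc_def by (simp only: complex_mod_cnj)
qed

lemma isCont_Dc: "z \<noteq> 1 \<Longrightarrow> z \<noteq> -1 \<Longrightarrow> isCont Dc z"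
  unfolding Dc_def by (intro continuous_intros) (auto simp: add_eq_0_iff minus_equation_iff min_def)

lemma Dc_pos: "z \<noteq> 1 \<Longrightarrow> z \<noteq> -1 \<Longrightarrow> Dc z > 0"
  unfolding Dc_def by (auto simp: add_eq_0_iff minus_equation_iff)

lemma ball_Re: "w \<in> ball z0 \<delta> \<Longrightarrow> \<bar>Re w - Re z0\<bar> < \<delta>"
  using abs_Re_le_cmod[of "z0 - w"] by (simp add: dist_norm abs_minus_commute)

lemma ball_Im: "w \<in> ball z0 \<delta> \<Longrightarrow> \<bar>Im w - Im z0\<bar> < \<delta>"
  using abs_Im_le_cmod[of "z0 - w"] by (simp add: dist_norm abs_minus_commute)

lemma csq_real: "0 \<le> y \<Longrightarrow> csqrt (of_real y) = of_real (sqrt y)"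
  using csqrt_of_real_nonneg[of "of_real y"] by simp

lemma one_minus_sq: "\<bar>x::real\<bar> < 1 \<Longrightarrow> 0 \<le> 1 - x\<^sup>2"
  using abs_square_less_1[of x] by simp

lemma fc_local:
  assumes z1: "z0 \<noteq> 1" and z2: "z0 \<noteq> -1" and e: "e > 0"
  shows "\<exists>\<delta>>0. \<forall>w\<in>ball z0 \<delta>. \<forall>w'\<in>ball z0 \<delta>. \<bar>fc w - fc w'\<bar> \<le> (Dc z0 + e) * cmod (w - w')"
proof -
  define L where "L = Dc z0 + e"
  have L0: "L > 0" unfolding L_def using Dc_pos[OF z1 z2] e by simp
  obtain \<delta>1 where \<delta>1: "\<delta>1 > 0" "\<forall>w\<in>ball z0 \<delta>1. Dc w \<in> {..<L}"
    using cont_ball[OF isCont_Dc[OF z1 z2], of "{..<L}"] e unfolding L_def by auto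
  define \<delta>2 where "\<delta>2 = min (cmod (z0 - 1)) (cmod (z0 + 1))"
  have \<delta>2: "\<delta>2 > 0" unfolding \<delta>2_def using z1 z2 by (auto simp: add_eq_0_iff minus_equation_iff)
  have nb: "w \<noteq> 1 \<and> w \<noteq> -1" if "w \<in> ball z0 \<delta>2" for w
  proof
    show "w \<noteq> 1" using that unfolding \<delta>2_def by (auto simp: dist_norm)
    show "w \<noteq> -1" using that unfolding \<delta>2_def by (auto simp: dist_norm)
  qed
  define \<delta>0 where "\<delta>0 = min \<delta>1 \<delta>2"
  have \<delta>0: "\<delta>0 > 0" unfolding \<delta>0_def using \<delta>1 \<delta>2 by simp
  have good: "Dc w \<le> L \<and> w \<noteq> 1 \<and> w \<noteq> -1" if "w \<in> ball z0 \<delta>0" for w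
  proof -
    have a: "w \<in> ball z0 \<delta>1" "w \<in> ball z0 \<delta>2" using that unfolding \<delta>0_def by auto
    have "Dc w < L" using \<delta>1(2) a(1) by auto
    then show ?thesis using nb[OF a(2)] by simp
  qed
  have mmlipH: "\<forall>w\<in>ball z0 \<delta>. \<forall>w'\<in>ball z0 \<delta>. Im w > 0 \<longrightarrow> Im w' > 0 \<longrightarrow> \<bar>mm w - mm w'\<bar> \<le> L * cmod (w - w')"
    if "\<delta> \<le> \<delta>0" for \<delta>
  proof (intro ballI impI)
    fix w w' assume w: "w \<in> ball z0 \<delta>" "w' \<in> ball z0 \<delta>" "Im w > 0" "Im w' > 0"
    show "\<bar>mm w - mm w'\<bar> \<le> L * cmod (w - w')"
      by (rule mm_lip[of "ball z0 \<delta> \<inter> {z. Im z > 0}"])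
         (use w that good in \<open>auto intro!: convex_Int convex_halfspace_Im_gt\<close>)
  qed
  consider "Im z0 > 0" | "Im z0 < 0" | "Im z0 = 0" "Re z0 > 1" | "Im z0 = 0" "Re z0 < -1"
    | "Im z0 = 0" "\<bar>Re z0\<bar> < 1"
  proof -
    have "Im z0 = 0 \<Longrightarrow> Re z0 \<noteq> 1 \<and> Re z0 \<noteq> -1" using z1 z2 by (auto simp: complex_eq_iff)
    then show ?thesis using that by linarith
  qed
  then have "\<exists>\<delta>>0. \<forall>w\<in>ball z0 \<delta>. \<forall>w'\<in>ball z0 \<delta>. \<bar>fc w - fc w'\<bar> \<le> L * cmod (w - w')"
  proof cases
    case 1
    define \<delta> where "\<delta> = min \<delta>0 (Im z0)"
    have im: "Im w > 0" if "w \<in> ball z0 \<delta>" for w using ball_Im[OF that] unfolding \<delta>_def by auto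
    have "\<forall>w\<in>ball z0 \<delta>. \<forall>w'\<in>ball z0 \<delta>. \<bar>fc w - fc w'\<bar> \<le> L * cmod (w - w')"
    proof (intro ballI)
      fix w w' assume w: "w \<in> ball z0 \<delta>" "w' \<in> ball z0 \<delta>"
      have "\<bar>mm w - mm w'\<bar> \<le> L * cmod (w - w')"
        by (rule mm_lip[of "ball z0 \<delta>"]) (use w im good in \<open>auto simp: \<delta>_def\<close>)
      then show "\<bar>fc w - fc w'\<bar> \<le> L * cmod (w - w')" using im[OF w(1)] im[OF w(2)] by (simp add: fc_def)
    qed
    moreover have "\<delta> > 0" unfolding \<delta>_def using \<delta>0 1 by auto
    ultimately show ?thesis by blast
  next
    case 2
    define \<delta> where "\<delta> = min \<delta>0 (- Im z0)"
    have im: "Im w < 0" if "w \<in> ball z0 \<delta>" for w using ball_Im[OF that] unfolding \<delta>_def by auto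
    have cb: "cnj v \<in> ball z0 \<delta>" if "v \<in> ball (cnj z0) \<delta>" for v
      using that by (simp add: dist_norm) (metis complex_cnj_diff complex_mod_cnj complex_cnj_cnj)
    have "\<forall>w\<in>ball z0 \<delta>. \<forall>w'\<in>ball z0 \<delta>. \<bar>fc w - fc w'\<bar> \<le> L * cmod (w - w')"
    proof (intro ballI)
      fix w w' assume w: "w \<in> ball z0 \<delta>" "w' \<in> ball z0 \<delta>"
      have cw: "cnj w \<in> ball (cnj z0) \<delta>" "cnj w' \<in> ball (cnj z0) \<delta>" using w
        by (simp_all add: dist_norm) (metis complex_cnj_diff complex_mod_cnj)+
      have "\<bar>mm (cnj w') - mm (cnj w)\<bar> \<le> L * cmod (cnj w' - cnj w)"
      proof (rule mm_lip[of "ball (cnj z0) \<delta>"])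
        fix v assume v: "v \<in> ball (cnj z0) \<delta>"
        have "cnj v \<in> ball z0 \<delta>0" using cb[OF v] unfolding \<delta>_def by auto
        then have "Dc (cnj v) \<le> L" using good by blast
        then have "Dc v \<le> L" using Dc_cnj[of v] by simp
        moreover have "Im v > 0" using im[OF cb[OF v]] by simp
        ultimately show "Im v > 0 \<and> Dc v \<le> L" by simp
      qed (use cw in auto)
      moreover have "cmod (cnj w' - cnj w) = cmod (w - w')"
        by (metis complex_cnj_diff complex_mod_cnj norm_minus_commute)
      ultimately show "\<bar>fc w - fc w'\<bar> \<le> L * cmod (w - w')" using im[OF w(1)] im[OF w(2)] by (simp add: fc_def)
    qed
    moreover have "\<delta> > 0" unfolding \<delta>_def using \<delta>0 2 by auto
    ultimately show ?thesis by blast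
  next
    case 3
    define \<delta> where "\<delta> = min \<delta>0 (Re z0 - 1)"
    have re: "Re w > 1" if "w \<in> ball z0 \<delta>" for w using ball_Re[OF that] unfolding \<delta>_def by auto
    have d0: "\<delta> \<le> \<delta>0" unfolding \<delta>_def by simp
    have "\<forall>w\<in>ball z0 \<delta>. \<forall>w'\<in>ball z0 \<delta>. \<bar>fc w - fc w'\<bar> \<le> L * cmod (w - w')"
    proof (rule axis_comb[where H=cT1])
      show "\<forall>w\<in>ball z0 \<delta>. \<forall>w'\<in>ball z0 \<delta>. \<bar>cT1 w - cT1 w'\<bar> \<le> L * cmod (w - w')"
      proof (intro ballI)
        fix w w' assume w: "w \<in> ball z0 \<delta>" "w' \<in> ball z0 \<delta>"
        show "\<bar>cT1 w - cT1 w'\<bar> \<le> L * cmod (w - w')"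
        proof (rule cT1_lip[OF convex_ball _ w])
          fix v assume v: "v \<in> ball z0 \<delta>"
          have "v - 1 \<notin> \<real>\<^sub>\<le>\<^sub>0" using re[OF v] by (auto simp: complex_nonpos_Reals_iff)
          then show "v - 1 \<notin> \<real>\<^sub>\<le>\<^sub>0 \<and> v \<noteq> 1 \<and> v \<noteq> -1 \<and> Dc v \<le> L" using good v d0 by auto
        qed
      qed
      show "\<forall>w\<in>ball z0 \<delta>. Im w = 0 \<longrightarrow> cT1 w = 0"
      proof (intro ballI impI)
        fix w assume w: "w \<in> ball z0 \<delta>" "Im w = 0"
        then have e: "w - 1 = of_real (Re w - 1)" by (simp add: complex_eq_iff)
        have "Ln (w - 1) = of_real (ln (Re w - 1))" unfolding e using re[OF w(1)] by (intro Ln_of_real) simp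
        then show "cT1 w = 0" unfolding cT1_def by simp
      qed
      show "\<forall>w\<in>ball z0 \<delta>. Im w > 0 \<longrightarrow> mm w \<le> cT1 w" by (auto simp: mm_def)
      show "\<forall>w\<in>ball z0 \<delta>. \<forall>w'\<in>ball z0 \<delta>. Im w > 0 \<longrightarrow> Im w' > 0 \<longrightarrow> \<bar>mm w - mm w'\<bar> \<le> L * cmod (w - w')"
        using mmlipH[OF d0] .
    qed (use 3 L0 in auto)
    moreover have "\<delta> > 0" unfolding \<delta>_def using \<delta>0 3 by auto
    ultimately show ?thesis by blast
  next
    case 4
    define \<delta> where "\<delta> = min \<delta>0 (- 1 - Re z0)"
    have re: "Re w < -1" if "w \<in> ball z0 \<delta>" for w using ball_Re[OF that] unfolding \<delta>_def by auto
    have d0: "\<delta> \<le> \<delta>0" unfolding \<delta>_def by simp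
    have "\<forall>w\<in>ball z0 \<delta>. \<forall>w'\<in>ball z0 \<delta>. \<bar>fc w - fc w'\<bar> \<le> L * cmod (w - w')"
    proof (rule axis_comb[where H=cT2])
      show "\<forall>w\<in>ball z0 \<delta>. \<forall>w'\<in>ball z0 \<delta>. \<bar>cT2 w - cT2 w'\<bar> \<le> L * cmod (w - w')"
      proof (intro ballI)
        fix w w' assume w: "w \<in> ball z0 \<delta>" "w' \<in> ball z0 \<delta>"
        show "\<bar>cT2 w - cT2 w'\<bar> \<le> L * cmod (w - w')"
        proof (rule cT2_lip[OF convex_ball _ w])
          fix v assume v: "v \<in> ball z0 \<delta>"
          have "-1 - v \<notin> \<real>\<^sub>\<le>\<^sub>0" using re[OF v] by (auto simp: complex_nonpos_Reals_iff)
          then show "-1 - v \<notin> \<real>\<^sub>\<le>\<^sub>0 \<and> v \<noteq> 1 \<and> v \<noteq> -1 \<and> Dc v \<le> L" using good v d0 by auto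
        qed
      qed
      show "\<forall>w\<in>ball z0 \<delta>. Im w = 0 \<longrightarrow> cT2 w = 0"
      proof (intro ballI impI)
        fix w assume w: "w \<in> ball z0 \<delta>" "Im w = 0"
        then have e: "-1 - w = of_real (- 1 - Re w)" by (simp add: complex_eq_iff)
        have "Ln (-1 - w) = of_real (ln (- 1 - Re w))" unfolding e using re[OF w(1)] by (intro Ln_of_real) simp
        then show "cT2 w = 0" unfolding cT2_def by simp
      qed
      show "\<forall>w\<in>ball z0 \<delta>. Im w > 0 \<longrightarrow> mm w \<le> cT2 w" by (auto simp: mm_def)
      show "\<forall>w\<in>ball z0 \<delta>. \<forall>w'\<in>ball z0 \<delta>. Im w > 0 \<longrightarrow> Im w' > 0 \<longrightarrow> \<bar>mm w - mm w'\<bar> \<le> L * cmod (w - w')"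
        using mmlipH[OF d0] .
    qed (use 4 L0 in auto)
    moreover have "\<delta> > 0" unfolding \<delta>_def using \<delta>0 4 by auto
    ultimately show ?thesis by blast
  next
    case 5
    have c1: "isCont (\<lambda>w. 1 - w\<^sup>2) z0" by (intro continuous_intros)
    have r1: "Re (1 - z0\<^sup>2) > 0" using 5 by (simp add: power2_eq_square abs_less_iff) (smt (verit) mult_less_cancel_right2 mult_minus_right mult_less_cancel_left2 mult_minus_left)
    obtain \<delta>a where \<delta>a: "\<delta>a > 0" "\<forall>w\<in>ball z0 \<delta>a. (1 - w\<^sup>2) \<in> {z. Re z > 0}"
      using cont_ball[OF c1 open_halfspace_Re_gt, of 0] r1 by auto
    have nz0: "1 - z0\<^sup>2 \<notin> \<real>\<^sub>\<le>\<^sub>0" using r1 by (auto simp: complex_nonpos_Reals_iff)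
    have c2: "isCont uA z0" using uA_deriv[OF nz0] by (rule DERIV_isCont)
    have "Sq z0 = of_real (sqrt (1 - (Re z0)\<^sup>2))"
    proof -
      have e: "1 - z0\<^sup>2 = of_real (1 - (Re z0)\<^sup>2)" using 5 by (simp add: complex_eq_iff power2_eq_square)
      show ?thesis unfolding Sq_def e by (rule csq_real[OF one_minus_sq]) (use 5 in simp)
    qed
    then have r2: "Im (uA z0) > 0" unfolding Im_uA using 5 by (simp add: abs_square_less_1)
    obtain \<delta>b where \<delta>b: "\<delta>b > 0" "\<forall>w\<in>ball z0 \<delta>b. uA w \<in> {z. Im z > 0}"
      using cont_ball[OF c2 open_halfspace_Im_gt, of 0] r2 by auto
    define \<delta> where "\<delta> = min (min \<delta>0 \<delta>a) (min \<delta>b (1 - \<bar>Re z0\<bar>))"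
    have d0: "\<delta> \<le> \<delta>0" unfolding \<delta>_def by simp
    have re: "\<bar>Re w\<bar> < 1" if "w \<in> ball z0 \<delta>" for w using ball_Re[OF that] unfolding \<delta>_def by auto
    have condA: "1 - w\<^sup>2 \<notin> \<real>\<^sub>\<le>\<^sub>0 \<and> uA w \<notin> \<real>\<^sub>\<le>\<^sub>0" if "w \<in> ball z0 \<delta>" for w
    proof -
      have "w \<in> ball z0 \<delta>a" "w \<in> ball z0 \<delta>b" using that unfolding \<delta>_def by auto
      then have "Re (1 - w\<^sup>2) > 0" "Im (uA w) > 0" using \<delta>a(2) \<delta>b(2) by auto
      then show ?thesis by (auto simp: complex_nonpos_Reals_iff)
    qed
    have "\<forall>w\<in>ball z0 \<delta>. \<forall>w'\<in>ball z0 \<delta>. \<bar>fc w - fc w'\<bar> \<le> L * cmod (w - w')"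
    proof (rule axis_comb[where H=cA])
      show "\<forall>w\<in>ball z0 \<delta>. \<forall>w'\<in>ball z0 \<delta>. \<bar>cA w - cA w'\<bar> \<le> L * cmod (w - w')"
      proof (intro ballI)
        fix w w' assume w: "w \<in> ball z0 \<delta>" "w' \<in> ball z0 \<delta>"
        show "\<bar>cA w - cA w'\<bar> \<le> L * cmod (w - w')"
          by (rule cA_lip[OF convex_ball _ w]) (use condA good d0 in auto)
      qed
      show "\<forall>w\<in>ball z0 \<delta>. Im w = 0 \<longrightarrow> cA w = 0"
      proof (intro ballI impI)
        fix w assume w: "w \<in> ball z0 \<delta>" "Im w = 0"
        define x where "x = Re w"
        have x: "\<bar>x\<bar> < 1" using re[OF w(1)] unfolding x_def .
        have e: "1 - w\<^sup>2 = of_real (1 - x\<^sup>2)" using w(2) unfolding x_def by (simp add: complex_eq_iff power2_eq_square)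
        have "Sq w = of_real (sqrt (1 - x\<^sup>2))" unfolding Sq_def e by (rule csq_real[OF one_minus_sq[OF x]])
        then have "uA w = Complex x (sqrt (1 - x\<^sup>2))" unfolding uA_def using w(2) x_def
          by (simp add: complex_eq_iff)
        then have "cmod (uA w) = 1" using one_minus_sq[OF x] by (simp add: cmod_def)
        moreover have "uA w \<noteq> 0" using condA[OF w(1)] by auto
        ultimately show "cA w = 0" unfolding cA_def by simp
      qed
      show "\<forall>w\<in>ball z0 \<delta>. Im w > 0 \<longrightarrow> mm w \<le> cA w" by (auto simp: mm_def)
      show "\<forall>w\<in>ball z0 \<delta>. \<forall>w'\<in>ball z0 \<delta>. Im w > 0 \<longrightarrow> Im w' > 0 \<longrightarrow> \<bar>mm w - mm w'\<bar> \<le> L * cmod (w - w')"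
        using mmlipH[OF d0] .
    qed (use 5 L0 in auto)
    moreover have "\<delta> > 0" unfolding \<delta>_def using \<delta>0 \<delta>a \<delta>b 5 by auto
    ultimately show ?thesis by blast
  qed
  then show ?thesis unfolding L_def .
qed

definition phi :: "real^2 \<Rightarrow> complex" where "phi v = Complex (v$1) (v$2)"
definition ff :: "real^2 \<Rightarrow> real" where "ff v = fc (phi v)"

lemma norm_r2: "norm (v::real^2) = sqrt ((v$1)\<^sup>2 + (v$2)\<^sup>2)"
  by (simp add: norm_vec_def L2_set_def sum_2)

lemma dist_phi: "dist v w = cmod (phi v - phi w)"
  by (simp add: dist_norm norm_r2 phi_def cmod_def)

lemma phi_vec: "phi (vector [a, b]) = Complex a b"
  by (simp add: phi_def)

lemma frontier_G:
  "frontier (UNIV - {p, q} :: (real^2) set) = {p, q}"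
proof -
  have "UNIV - {p, q} = - {p, q}" by auto
  then have "frontier (UNIV - {p, q} :: (real^2) set) = frontier {p, q}" by simp
  also have "\<dots> = {p, q}"
    unfolding frontier_def by (simp add: closure_closed finite_imp_closed empty_interior_finite)
  finally show ?thesis .
qed

definition GG :: "(real^2) set" where "GG = UNIV - {vector [-1, 0], vector [1, 0]}"

lemma bdist_GG: "bdist GG v = min (cmod (phi v + 1)) (cmod (phi v - 1))"
proof -
  have "bdist GG v = infdist v ({vector [-1, 0]} \<union> {vector [1, 0]})"
    unfolding bdist_def GG_def frontier_G by (simp add: insert_commute)
  also have "\<dots> = min (dist v (vector [-1, 0])) (dist v (vector [1, 0]))"
    by (subst infdist_Un_min) auto
  also have "\<dots> = min (cmod (phi v + 1)) (cmod (phi v - 1))"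
  proof -
    have "Complex (-1) 0 = -1" "Complex 1 0 = 1" by (simp_all add: complex_eq_iff)
    then show ?thesis unfolding dist_phi phi_vec by simp
  qed
  finally show ?thesis .
qed

lemma GG_phi: assumes "v \<in> GG" shows "phi v \<noteq> 1" "phi v \<noteq> -1"
proof -
  have e: "v = vector [a, b] \<longleftrightarrow> v$1 = a \<and> v$2 = b" for a b :: real
    by (simp add: vec_eq_iff forall_2)
  show "phi v \<noteq> 1" using assms e[of 1 0] unfolding GG_def by (auto simp: phi_def complex_eq_iff)
  show "phi v \<noteq> -1" using assms e[of "-1" 0] unfolding GG_def by (auto simp: phi_def complex_eq_iff)
qed

lemma invbdist: "1 / bdist GG v = Dc (phi v)"
  unfolding bdist_GG Dc_def by (simp add: min.commute)

lemma bdist_pos: "v \<in> GG \<Longrightarrow> bdist GG v > 0"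
  using GG_phi[of v] unfolding bdist_GG by (auto simp: add_eq_0_iff minus_equation_iff)

lemma ff_lip: "\<forall>z\<in>GG. \<forall>e>0. \<exists>\<delta>>0. \<forall>w\<in>ball z \<delta>. \<forall>w'\<in>ball z \<delta>.
                 \<bar>(- ff w) - (- ff w')\<bar> \<le> (1 / bdist GG z + e) * dist w w'"
proof (intro ballI allI impI)
  fix z :: "real^2" and e :: real assume z: "z \<in> GG" and e: "e > 0"
  obtain \<delta> where \<delta>: "\<delta> > 0" "\<forall>w\<in>ball (phi z) \<delta>. \<forall>w'\<in>ball (phi z) \<delta>. \<bar>fc w - fc w'\<bar> \<le> (Dc (phi z) + e) * cmod (w - w')"
    using fc_local[OF GG_phi[OF z] e] by blast
  show "\<exists>\<delta>>0. \<forall>w\<in>ball z \<delta>. \<forall>w'\<in>ball z \<delta>. \<bar>(- ff w) - (- ff w')\<bar> \<le> (1 / bdist GG z + e) * dist w w'"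
  proof (intro exI[where x=\<delta>] conjI ballI)
    fix w w' assume w: "w \<in> ball z \<delta>" "w' \<in> ball z \<delta>"
    then have "phi w \<in> ball (phi z) \<delta>" "phi w' \<in> ball (phi z) \<delta>" by (auto simp: dist_phi dist_norm)
    then have "\<bar>fc (phi w) - fc (phi w')\<bar> \<le> (Dc (phi z) + e) * cmod (phi w - phi w')" using \<delta>(2) by blast
    then show "\<bar>(- ff w) - (- ff w')\<bar> \<le> (1 / bdist GG z + e) * dist w w'"
      unfolding invbdist dist_phi ff_def by (simp add: abs_minus_commute)
  qed (use \<delta> in auto)
qed

lemma Ln_polar:
  assumes "r > 0" "-pi < t" "t \<le> pi" "z = Complex (r * cos t) (r * sin t)"
  shows "Ln z = Complex (ln r) t"
proof -
  have "exp (Complex (ln r) t) = z"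
    using assms by (simp add: exp_eq_polar complex_eq_iff)
  then show ?thesis using Ln_exp[of "Complex (ln r) t"] assms by simp
qed

lemma mm_test:
  assumes b: "\<beta> > 0" and h: "arsinh \<beta> + arctan \<beta> = pi"
  shows "mm (Complex 0 \<beta>) = arsinh \<beta>"
proof -
  define r where "r = sqrt (1 + \<beta>\<^sup>2)"
  define t where "t = arctan \<beta>"
  have r0: "r > 0" unfolding r_def by (simp add: add_pos_nonneg)
  have ct: "r * cos t = 1" unfolding r_def t_def cos_arctan using r0 r_def by simp
  have st: "r * sin t = \<beta>" unfolding r_def t_def sin_arctan using r0 r_def by simp
  have t: "0 < t" "t < pi/2" unfolding t_def using b arctan_bounded[of \<beta>] arctan_monotone[of 0 \<beta>] by auto
  have e: "1 - (Complex 0 \<beta>)\<^sup>2 = of_real (1 + \<beta>\<^sup>2)" by (simp add: complex_eq_iff power2_eq_square)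
  have "Sq (Complex 0 \<beta>) = of_real r" unfolding Sq_def r_def e by (rule csq_real) simp
  then have u: "uA (Complex 0 \<beta>) = Complex 0 (\<beta> + r)" unfolding uA_def by (simp add: complex_eq_iff)
  have "cA (Complex 0 \<beta>) = ln (\<beta> + r)"
  proof -
    have nz: "Complex 0 (\<beta> + r) \<noteq> 0" using b r0 by (simp add: complex_eq_iff)
    have "cmod (Complex 0 (\<beta> + r)) = \<beta> + r" using b r0 by (simp add: cmod_def)
    then show ?thesis unfolding cA_def u Re_Ln[OF nz] by simp
  qed
  also have "\<dots> = arsinh \<beta>" unfolding arsinh_real_def r_def by (simp add: add.commute)
  finally have A: "cA (Complex 0 \<beta>) = arsinh \<beta>" .
  have "Ln (Complex 0 \<beta> - 1) = Complex (ln r) (pi - t)"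
    by (rule Ln_polar) (use r0 t ct st in \<open>auto simp: complex_eq_iff\<close>)
  then have T1: "cT1 (Complex 0 \<beta>) = pi - t" unfolding cT1_def by simp
  have "Ln (-1 - Complex 0 \<beta>) = Complex (ln r) (t - pi)"
    by (rule Ln_polar) (use r0 t ct st in \<open>auto simp: complex_eq_iff cos_diff sin_diff\<close>)
  then have T2: "cT2 (Complex 0 \<beta>) = pi - t" unfolding cT2_def by simp
  show ?thesis unfolding mm_def A T1 T2 using h unfolding t_def by simp
qed

lemma linepath_rect: "rectifiable_path (linepath a b)"
  unfolding rectifiable_path_def
proof
  show "path (linepath a b)" by simp
  show "bdd_above (polygon_lengths (linepath a b) 0 1)"
  proof (rule bdd_aboveI[where M="norm (b - a)"])
    fix s assume "s \<in> polygon_lengths (linepath a b) 0 1"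
    then obtain d n where p: "is_partition 0 1 d n"
      and s: "s = (\<Sum>i<n. norm (linepath a b (d (Suc i)) - linepath a b (d i)))"
      unfolding polygon_lengths_def by blast
    have "s = (\<Sum>i<n. (d (Suc i) - d i) * norm (b - a))"
      unfolding s
    proof (rule sum.cong)
      fix i assume i: "i \<in> {..<n}"
      have "linepath a b (d (Suc i)) - linepath a b (d i) = (d (Suc i) - d i) *\<^sub>R (b - a)"
        by (simp add: linepath_def algebra_simps)
      moreover have "d i \<le> d (Suc i)" using p i by (auto simp: is_partition_def)
      ultimately show "norm (linepath a b (d (Suc i)) - linepath a b (d i)) = (d (Suc i) - d i) * norm (b - a)"
        by simp
    qed simp
    also have "\<dots> = (d n - d 0) * norm (b - a)"
      unfolding sum_distrib_right[symmetric] sum_lessThan_telescope ..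
    also have "\<dots> = norm (b - a)" using p by (simp add: is_partition_def)
    finally show "s \<le> norm (b - a)" by simp
  qed
qed

lemma qh_ge:
  assumes b: "\<beta> > 0" and h: "arsinh \<beta> + arctan \<beta> = pi"
    and rp: "rectifiable_path g" and img: "path_image g \<subseteq> GG"
    and st: "pathstart g = vector [0, \<beta>]" and fi: "pathfinish g = vector [0, - \<beta>]"
  shows "2 * arsinh \<beta> \<le> qh_length GG g"
proof -
  have "(- ff (pathfinish g)) - (- ff (pathstart g)) \<le> qh_length GG g"
    by (rule qh_lower[OF rp img _ ff_lip]) (use bdist_pos in blast)
  moreover have "ff (pathstart g) = arsinh \<beta>"
    unfolding st ff_def phi_vec fc_def using b mm_test[OF b h] by simp
  moreover have "ff (pathfinish g) = - arsinh \<beta>"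
  proof -
    have "cnj (Complex 0 (- \<beta>)) = Complex 0 \<beta>" by (simp add: complex_eq_iff)
    then show ?thesis unfolding fi ff_def phi_vec fc_def using b mm_test[OF b h] by simp
  qed
  ultimately show ?thesis by simp
qed

theorem mainTheorem19:
  fixes \<beta> :: real
  assumes "\<beta> > 0" and "arsinh \<beta> + arctan \<beta> = pi"
  shows "ereal (2 * arsinh \<beta> / ln (1 + 2 * \<beta> / sqrt (1 + \<beta>\<^sup>2)))
           \<le> unif_const (UNIV - {vector [-1, 0], vector [1, 0]} :: (real^2) set)"
proof -
  note b = assms(1) and h = assms(2)
  define x :: "real^2" where "x = vector [0, \<beta>]"
  define y :: "real^2" where "y = vector [0, - \<beta>]"
  define J where "J = ln (1 + 2 * \<beta> / sqrt (1 + \<beta>\<^sup>2))"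
  have GGeq: "(UNIV - {vector [-1, 0], vector [1, 0]} :: (real^2) set) = GG" unfolding GG_def ..
  have inGG: "vector [0, c] \<in> GG" for c :: real
  proof -
    have "(vector [0, c] :: real^2) $ 1 = 0" by simp
    moreover have "(vector [-1, 0] :: real^2) $ 1 = -1" "(vector [1, 0] :: real^2) $ 1 = 1" by simp_all
    ultimately show ?thesis unfolding GG_def by (auto dest: arg_cong[where f="\<lambda>v. v $ 1"])
  qed
  have J0: "J > 0" unfolding J_def using b by (intro ln_gt_zero) (auto intro!: divide_pos_pos add_pos_nonneg)
  have r: "sqrt (1 + \<beta>\<^sup>2) > 0" by (simp add: add_pos_nonneg)
  have jxy: "j_dist GG x y = J"
  proof -
    have e: "4 * \<beta>\<^sup>2 = (2 * \<beta>)\<^sup>2" by (simp add: power2_eq_square)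
    have "dist x y = 2 * \<beta>" unfolding x_def y_def dist_phi phi_vec using b
      by (simp add: cmod_def real_sqrt_mult)
    moreover have "bdist GG x = sqrt (1 + \<beta>\<^sup>2)" "bdist GG y = sqrt (1 + \<beta>\<^sup>2)"
      unfolding x_def y_def bdist_GG phi_vec by (simp_all add: cmod_def)
    ultimately show ?thesis unfolding j_dist_def J_def by simp
  qed
  have kxy: "2 * arsinh \<beta> \<le> qh_dist GG x y"
    unfolding qh_dist_def
  proof (rule cInf_greatest)
    have img: "path_image (linepath x y) \<subseteq> GG"
    proof
      fix v assume "v \<in> path_image (linepath x y)"
      then obtain t where "v = linepath x y t" unfolding path_image_def by auto
      then have "v = vector [0, v $ 2]"
        unfolding x_def y_def linepath_def by (simp add: vec_eq_iff forall_2)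
      then show "v \<in> GG" using inGG by metis
    qed
    show "{qh_length GG g |g. rectifiable_path g \<and> path_image g \<subseteq> GG \<and> pathstart g = x \<and> pathfinish g = y} \<noteq> {}"
    proof -
      note a = img
      have "qh_length GG (linepath x y) \<in> {qh_length GG g |g. rectifiable_path g \<and> path_image g \<subseteq> GG \<and> pathstart g = x \<and> pathfinish g = y}"
        using linepath_rect[of x y] a by (intro CollectI exI[where x="linepath x y"]) simp
      then show ?thesis by blast
    qed
  next
    fix s assume "s \<in> {qh_length GG g |g. rectifiable_path g \<and> path_image g \<subseteq> GG \<and> pathstart g = x \<and> pathfinish g = y}"
    then show "2 * arsinh \<beta> \<le> s" using qh_ge[OF b h] unfolding x_def y_def by blast
  qed
  show ?thesis
    unfolding GGeq unif_const_def J_def[symmetric]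
  proof (rule Inf_greatest)
    fix X assume "X \<in> {ereal A |A. 1 \<le> A \<and> (\<forall>x\<in>GG. \<forall>y\<in>GG. qh_dist GG x y \<le> A * j_dist GG x y)}"
    then obtain A where X: "X = ereal A" and A: "\<forall>x\<in>GG. \<forall>y\<in>GG. qh_dist GG x y \<le> A * j_dist GG x y"
      by blast
    have "2 * arsinh \<beta> \<le> A * J" using kxy A inGG jxy unfolding x_def y_def by (metis order_trans)
    then have "2 * arsinh \<beta> / J \<le> A" using J0 by (simp add: divide_le_eq)
    then show "ereal (2 * arsinh \<beta> / J) \<le> X" unfolding X by simp
  qed
qed

end
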